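(* Let $(b,c)$ be a connected graph over a countable set $X$ with a cocompact action of a group $G$, and fix $x_0\in X$. Let $f_1,f_2\in\mathrm{Dom}(H_{b,c})$ be strictly positive, normalised by $f_1(x_0)=f_2(x_0)=1$, and multiplicative with the same character $\gamma_{f_1}=\gamma_{f_2}$. If $f_1$ is superharmonic and $f_2$ is subharmonic, then $f_1=f_2$ and both are harmonic.
   Context: A graph over $X$ is $(b,c)$ with $b:X\times X\to[0,\infty)$, $c:X\to\mathbb{R}$, $\sum_yb(x,y)<\infty$ ($b$ need not be symmetric); connected: any two points are joined by a finite sequence $y_1,\dots,y_n$ with $b(y_i,y_{i+1})>0$. $H_{b,c}f(x)=\sum_yb(x,y)(f(x)-f(y))+c(x)f(x)$ on $\mathrm{Dom}(H)=\{f:\sum_yb(x,y)|f(y)|<\infty\ \forall x\}$; $f$ is superharmonic if $Hf\ge0$, subharmonic if $Hf\le0$, harmonic if $Hf=0$. $T_gf(x)=f(g^{-1}x)$; cocompact: $GV=X$ for some finite $V$. $f$ is multiplicative with character $\gamma_f$ if $\gamma_f:G\to(0,\infty)$ is a homomorphism with $T_gf=\gamma_f(g^{-1})f$ for all $g\in G$. *)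

theory Defs
  imports "HOL-Analysis.Analysis" "HOL-Algebra.Group_Action"
begin

definition is_graph :: "('x \<Rightarrow> 'x \<Rightarrow> real) \<Rightarrow> ('x \<Rightarrow> real) \<Rightarrow> bool" where
  "is_graph b c \<longleftrightarrow> (\<forall>x y. 0 \<le> b x y) \<and> (\<forall>x. (\<lambda>y. b x y) summable_on UNIV)"

definition graph_connected :: "('x \<Rightarrow> 'x \<Rightarrow> real) \<Rightarrow> bool" where
  "graph_connected b \<longleftrightarrow> (\<forall>x y. (\<lambda>u v. 0 < b u v)\<^sup>*\<^sup>* x y)"

definition dom_H :: "('x \<Rightarrow> 'x \<Rightarrow> real) \<Rightarrow> ('x \<Rightarrow> real) set" where
  "dom_H b = {f. \<forall>x. (\<lambda>y. b x y * \<bar>f y\<bar>) summable_on UNIV}"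

definition H_op :: "('x \<Rightarrow> 'x \<Rightarrow> real) \<Rightarrow> ('x \<Rightarrow> real) \<Rightarrow> ('x \<Rightarrow> real) \<Rightarrow> 'x \<Rightarrow> real" where
  "H_op b c f x = (\<Sum>\<^sub>\<infinity>y. b x y * (f x - f y)) + c x * f x"

definition graph_action :: "('g, 'm) monoid_scheme \<Rightarrow> ('g \<Rightarrow> 'x \<Rightarrow> 'x)
    \<Rightarrow> ('x \<Rightarrow> 'x \<Rightarrow> real) \<Rightarrow> ('x \<Rightarrow> real) \<Rightarrow> bool" where
  "graph_action G \<phi> b c \<longleftrightarrow> group_action G UNIV \<phi> \<and>
     (\<forall>g\<in>carrier G. \<forall>x y. b (\<phi> g x) (\<phi> g y) = b x y \<and> c (\<phi> g x) = c x)"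

definition cocompact :: "('g, 'm) monoid_scheme \<Rightarrow> ('g \<Rightarrow> 'x \<Rightarrow> 'x) \<Rightarrow> bool" where
  "cocompact G \<phi> \<longleftrightarrow> (\<exists>V. finite V \<and> (\<Union>g\<in>carrier G. \<phi> g ` V) = UNIV)"

definition is_character :: "('g, 'm) monoid_scheme \<Rightarrow> ('g \<Rightarrow> real) \<Rightarrow> bool" where
  "is_character G \<gamma> \<longleftrightarrow> (\<forall>g\<in>carrier G. 0 < \<gamma> g) \<and>
     (\<forall>g\<in>carrier G. \<forall>h\<in>carrier G. \<gamma> (g \<otimes>\<^bsub>G\<^esub> h) = \<gamma> g * \<gamma> h)"

definition multiplicative :: "('g, 'm) monoid_scheme \<Rightarrow> ('g \<Rightarrow> 'x \<Rightarrow> 'x)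
    \<Rightarrow> ('x \<Rightarrow> real) \<Rightarrow> ('g \<Rightarrow> real) \<Rightarrow> bool" where
  "multiplicative G \<phi> f \<gamma> \<longleftrightarrow> is_character G \<gamma> \<and>
     (\<forall>g\<in>carrier G. \<forall>x. f (\<phi> (inv\<^bsub>G\<^esub> g) x) = \<gamma> (inv\<^bsub>G\<^esub> g) * f x)"

end

theory Submission
  imports Defs
begin

lemma bf_summable:
  assumes "is_graph b c" "f \<in> dom_H b" "\<forall>x. 0 < f x"
  shows "(\<lambda>y. b x y * f y) summable_on UNIV"
proof -
  have "(\<lambda>y. b x y * \<bar>f y\<bar>) summable_on UNIV" using assms(2) unfolding dom_H_def by blast
  moreover have "\<And>y. b x y * \<bar>f y\<bar> = b x y * f y" using assms(3) by (simp add: less_imp_le)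
  ultimately show ?thesis by simp
qed

lemma H_expand:
  assumes "is_graph b c" "f \<in> dom_H b" "\<forall>x. 0 < f x"
  shows "H_op b c f x = f x * infsum (b x) UNIV - infsum (\<lambda>y. b x y * f y) UNIV + c x * f x"
proof -
  have s1: "(\<lambda>y. b x y * f y) summable_on UNIV" using bf_summable[OF assms] .
  have s0: "b x summable_on UNIV" using assms(1) unfolding is_graph_def by auto
  have s0': "(\<lambda>y. f x * b x y) summable_on UNIV" by (rule summable_on_cmult_right[OF s0])
  have s1': "(\<lambda>y. - (b x y * f y)) summable_on UNIV" using summable_on_uminus[THEN iffD2, OF s1] .
  have "(\<Sum>\<^sub>\<infinity>y. b x y * (f x - f y)) = (\<Sum>\<^sub>\<infinity>y. f x * b x y + - (b x y * f y))"
    by (rule infsum_cong) (simp add: algebra_simps)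
  also have "\<dots> = (\<Sum>\<^sub>\<infinity>y. f x * b x y) + (\<Sum>\<^sub>\<infinity>y. - (b x y * f y))"
    by (rule infsum_add[OF s0' s1'])
  also have "\<dots> = f x * infsum (b x) UNIV - infsum (\<lambda>y. b x y * f y) UNIV"
    using infsum_cmult_right[of "f x" "b x" UNIV] s0 infsum_uminus[of "\<lambda>y. b x y * f y" UNIV] by simp
  finally show ?thesis unfolding H_op_def by simp
qed

theorem lemma9:
  fixes G :: "('g, 'm) monoid_scheme" and \<phi> :: "'g \<Rightarrow> 'x \<Rightarrow> 'x"
    and b :: "'x \<Rightarrow> 'x \<Rightarrow> real" and c :: "'x \<Rightarrow> real"
    and f1 f2 :: "'x \<Rightarrow> real" and \<gamma> :: "'g \<Rightarrow> real" and x0 :: 'x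
  assumes "countable (UNIV :: 'x set)"
    and "is_graph b c" and "graph_connected b"
    and "group G" and "graph_action G \<phi> b c" and "cocompact G \<phi>"
    and "f1 \<in> dom_H b" and "f2 \<in> dom_H b"
    and "\<forall>x. 0 < f1 x" and "\<forall>x. 0 < f2 x"
    and "f1 x0 = 1" and "f2 x0 = 1"
    and "multiplicative G \<phi> f1 \<gamma>" and "multiplicative G \<phi> f2 \<gamma>"
    and "\<forall>x. H_op b c f1 x \<ge> 0" and "\<forall>x. H_op b c f2 x \<le> 0"
  shows "f1 = f2 \<and> (\<forall>x. H_op b c f1 x = 0) \<and> (\<forall>x. H_op b c f2 x = 0)"
proof -
  define h where "h x = f2 x / f1 x" for x
  have inv: "h (\<phi> g x) = h x" if g: "g \<in> carrier G" for g x
  proof -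
    have ig: "inv\<^bsub>G\<^esub> g \<in> carrier G" and iig: "inv\<^bsub>G\<^esub> (inv\<^bsub>G\<^esub> g) = g"
      using g assms(4) by (auto simp: group.inv_closed group.inv_inv)
    have "f1 (\<phi> g x) = \<gamma> g * f1 x" "f2 (\<phi> g x) = \<gamma> g * f2 x"
      using assms(13,14) ig iig unfolding multiplicative_def by metis+
    moreover have "\<gamma> g > 0" using assms(13) g unfolding multiplicative_def is_character_def by auto
    ultimately show ?thesis unfolding h_def by simp
  qed
  obtain V where V: "finite V" "(\<Union>g\<in>carrier G. \<phi> g ` V) = UNIV"
    using assms(6) unfolding cocompact_def by auto
  have rng: "range h = h ` V"
  proof
    show "range h \<subseteq> h ` V"
    proof
      fix z assume "z \<in> range h"
      then obtain x where x: "z = h x" by auto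
      have "x \<in> (\<Union>g\<in>carrier G. \<phi> g ` V)" using V(2) by auto
      then obtain g v where "g \<in> carrier G" "v \<in> V" "x = \<phi> g v" by auto
      then show "z \<in> h ` V" using inv x by auto
    qed
  qed auto
  have "finite (range h)" using rng V(1) by simp
  define M where "M = Max (range h)"
  have hM: "h y \<le> M" for y unfolding M_def using \<open>finite (range h)\<close> by simp
  obtain xm where xm: "h xm = M" unfolding M_def using \<open>finite (range h)\<close>
    by (metis Max_in UNIV_not_empty empty_is_image imageE)
  have Mpos: "M > 0" using xm assms(9,10) unfolding h_def by (metis divide_pos_pos)
  define D where "D y = M * f1 y - f2 y" for y
  have Dnn: "D y \<ge> 0" for y
    using hM[of y] assms(9) unfolding D_def h_def by (simp add: divide_le_eq mult.commute)
  have D0: "D y = 0 \<longleftrightarrow> h y = M" for y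
    using assms(9) unfolding D_def h_def by (smt (verit) nonzero_mult_div_cancel_left divide_eq_eq mult.commute)
  have step: "h y = M" if hx: "h x = M" and bxy: "0 < b x y" for x y
  proof -
    have s1: "(\<lambda>y. b x y * f1 y) summable_on UNIV" using bf_summable[OF assms(2,7,9)] .
    have s2: "(\<lambda>y. b x y * f2 y) summable_on UNIV" using bf_summable[OF assms(2,8,10)] .
    have s1': "(\<lambda>y. M * (b x y * f1 y)) summable_on UNIV" by (rule summable_on_cmult_right[OF s1])
    have s2': "(\<lambda>y. - (b x y * f2 y)) summable_on UNIV" using summable_on_uminus[THEN iffD2, OF s2] .
    have sD: "(\<lambda>y. b x y * D y) summable_on UNIV"
      using summable_on_add[OF s1' s2'] by (simp add: D_def algebra_simps)
    have iD: "infsum (\<lambda>y. b x y * D y) UNIV = M * infsum (\<lambda>y. b x y * f1 y) UNIV - infsum (\<lambda>y. b x y * f2 y) UNIV"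
    proof -
      have "infsum (\<lambda>y. b x y * D y) UNIV = infsum (\<lambda>y. M * (b x y * f1 y) + - (b x y * f2 y)) UNIV"
        by (rule infsum_cong) (simp add: D_def algebra_simps)
      also have "\<dots> = infsum (\<lambda>y. M * (b x y * f1 y)) UNIV + infsum (\<lambda>y. - (b x y * f2 y)) UNIV"
        by (rule infsum_add[OF s1' s2'])
      finally show ?thesis using infsum_cmult_right[of M "\<lambda>y. b x y * f1 y" UNIV] s1
          infsum_uminus[of "\<lambda>y. b x y * f2 y" UNIV] by simp
    qed
    have fx: "f2 x = M * f1 x" using hx assms(9) unfolding h_def by (smt (verit) divide_eq_eq)
    have "M * H_op b c f1 x - H_op b c f2 x \<ge> 0"
      using assms(15,16) Mpos by (smt (verit) mult_nonneg_nonneg)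
    hence "infsum (\<lambda>y. b x y * D y) UNIV \<le> 0"
      unfolding H_expand[OF assms(2,7,9)] H_expand[OF assms(2,8,10)] iD fx
      by (simp add: algebra_simps)
    hence "b x y * D y = 0"
      using nonneg_infsum_le_0D[OF _ sD] Dnn assms(2) unfolding is_graph_def by (simp add: mult_nonneg_nonneg)
    thus ?thesis using bxy D0 by simp
  qed
  have all: "h y = M" for y
  proof -
    have "(\<lambda>u v. 0 < b u v)\<^sup>*\<^sup>* xm y" using assms(3) unfolding graph_connected_def by auto
    thus ?thesis
      by (induction rule: rtranclp_induct) (use xm step in auto)
  qed
  have "M = 1" using all[of x0] assms(11,12) unfolding h_def by simp
  hence eq: "f1 = f2" using all assms(9) unfolding h_def by (auto simp: fun_eq_iff divide_eq_1_iff)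
  show ?thesis using eq assms(15,16) by (auto intro: order.antisym)
qed

end
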